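(* Let $k>1$, $\gamma>0$, $\delta>1$, and let $Z=\{(\tau,s)\in\mathcal C: g(\tau,s)=0\}$. (A) If $1<\delta<\Phi$ and $\gamma>\gamma_+(\delta)$, then for every $\tau\in(0,1]$ the set $Z\cap(\{\tau\}\times S^1)$ has exactly two points, $Z$ contains no fold point, and $Z$ has exactly two connected components, each meeting every circle $\{\tau\}\times S^1$, $\tau\in(0,1]$, in exactly one point. (B) If $1<\delta<\Phi$ and $0<\gamma<\gamma_+(\delta)$, then there are $0<\tau_1<\tau_2<1$ such that $Z\cap(\{\tau\}\times S^1)$ has exactly two points for $\tau\in(0,\tau_1)\cup(\tau_2,1]$, is the single point $(\tau,\pi/2)$ for $\tau\in\{\tau_1,\tau_2\}$, and is empty for $\tau\in(\tau_1,\tau_2)$; $(\tau_1,\pi/2)$ is a subcritical fold point and $(\tau_2,\pi/2)$ is a supercritical fold point; $Z$ has exactly two connected components, one contained in $\{\tau\le\tau_1\}$ and one in $\{\tau\ge\tau_2\}$. (C) If $\delta>\Phi$, then there is $\tau_0\in(0,1)$ such that $Z\cap(\{\tau\}\times S^1)$ is empty for $\tau<\tau_0$, is the single point $(\tau_0,\pi/2)$ for $\tau=\tau_0$, and has exactly two points for $\tau\in(\tau_0,1]$; $(\tau_0,\pi/2)$ is a supercritical fold point and $Z$ is connected.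
   Context: Let $S^1=\mathbb R/2\pi\mathbb Z$ and $\mathcal C=\{(\tau,s):0<\tau\le1,\ s\in S^1\}$. Let $p(\delta)=-\delta^2+\delta+1$, $\Phi=(1+\sqrt5)/2$. For parameters $\delta>1$, $\gamma>0$, $k>0$ define $g:\mathcal C\to\mathbb R$, $g(\tau,s)=\tau^{\delta^2}+\gamma\tau^{\delta^2-\delta}(1+k\sin s)-\tau$; thus $g(\tau,s)=0$ iff $\gamma(1+k\sin s)=\mathcal F_\delta(\tau)$, where $\mathcal F_\delta(\tau)=\tau^{p(\delta)}-\tau^\delta$. For $1<\delta<\Phi$, $M_{\mathcal F}(\delta)=\max_{(0,1]}\mathcal F_\delta>0$, and $\gamma_+(\delta)=M_{\mathcal F}(\delta)/(1+k)$. A fold point is a point $(\tau_0,s_0)\in\mathcal C$ with $g(\tau_0,s_0)=0$ and $\partial g/\partial s(\tau_0,s_0)=0$. It is supercritical if there is a neighbourhood $U$ of $(\tau_0,s_0)$ such that for $\tau>\tau_0$ close to $\tau_0$ the set $\{s:(\tau,s)\in U,\ g(\tau,s)=0\}$ has exactly two elements, for $\tau=\tau_0$ exactly one, and for $\tau<\tau_0$ close to $\tau_0$ none; subcritical if the same holds with the roles of $\tau>\tau_0$ and $\tau<\tau_0$ interchanged. *)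

theory Defs
  imports "HOL-Analysis.Analysis"
begin

text \<open>The circle S^1 = R/2piZ is realised as the unit circle in the complex plane via
  s \<mapsto> cis s; the cylinder C is the subset {(tau,z). 0 < tau \<le> 1, |z| = 1} of real \<times> complex.\<close>

definition Phi :: real where "Phi = (1 + sqrt 5) / 2"

definition pexp :: "real \<Rightarrow> real" where "pexp \<delta> = - (\<delta> ^ 2) + \<delta> + 1"

definition FF :: "real \<Rightarrow> real \<Rightarrow> real" where
  "FF \<delta> \<tau> = \<tau> powr (pexp \<delta>) - \<tau> powr \<delta>"

definition MF :: "real \<Rightarrow> real" where
  "MF \<delta> = Sup (FF \<delta> ` {0<..1})"

definition gamma_plus :: "real \<Rightarrow> real \<Rightarrow> real" where
  "gamma_plus k \<delta> = MF \<delta> / (1 + k)"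

definition gfun :: "real \<Rightarrow> real \<Rightarrow> real \<Rightarrow> real \<Rightarrow> real \<Rightarrow> real" where
  "gfun \<delta> \<gamma> k \<tau> s = \<tau> powr (\<delta> ^ 2) + \<gamma> * \<tau> powr (\<delta> ^ 2 - \<delta>) * (1 + k * sin s) - \<tau>"

definition cyl :: "(real \<times> complex) set" where
  "cyl = {(\<tau>, z). 0 < \<tau> \<and> \<tau> \<le> 1 \<and> cmod z = 1}"

definition Zset :: "real \<Rightarrow> real \<Rightarrow> real \<Rightarrow> (real \<times> complex) set" where
  "Zset \<delta> \<gamma> k = {(\<tau>, cis s) | \<tau> s. 0 < \<tau> \<and> \<tau> \<le> 1 \<and> gfun \<delta> \<gamma> k \<tau> s = 0}"

definition fibre :: "(real \<times> complex) set \<Rightarrow> real \<Rightarrow> complex set" where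
  "fibre A \<tau> = {z. (\<tau>, z) \<in> A}"

definition fold_point :: "real \<Rightarrow> real \<Rightarrow> real \<Rightarrow> real \<Rightarrow> real \<Rightarrow> bool" where
  "fold_point \<delta> \<gamma> k \<tau>0 s0 \<longleftrightarrow> 0 < \<tau>0 \<and> \<tau>0 \<le> 1 \<and> gfun \<delta> \<gamma> k \<tau>0 s0 = 0 \<and>
     ((\<lambda>s. gfun \<delta> \<gamma> k \<tau>0 s) has_real_derivative 0) (at s0)"

definition supercritical_fold :: "real \<Rightarrow> real \<Rightarrow> real \<Rightarrow> real \<Rightarrow> real \<Rightarrow> bool" where
  "supercritical_fold \<delta> \<gamma> k \<tau>0 s0 \<longleftrightarrow> fold_point \<delta> \<gamma> k \<tau>0 s0 \<and>
     (\<exists>U. open U \<and> (\<tau>0, cis s0) \<in> U \<and>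
        (\<exists>\<epsilon>>0. \<forall>\<tau>. \<tau>0 < \<tau> \<and> \<tau> < \<tau>0 + \<epsilon> \<and> \<tau> \<le> 1 \<longrightarrow> card (fibre (U \<inter> Zset \<delta> \<gamma> k) \<tau>) = 2) \<and>
        card (fibre (U \<inter> Zset \<delta> \<gamma> k) \<tau>0) = 1 \<and>
        (\<exists>\<epsilon>>0. \<forall>\<tau>. \<tau>0 - \<epsilon> < \<tau> \<and> \<tau> < \<tau>0 \<and> 0 < \<tau> \<longrightarrow> fibre (U \<inter> Zset \<delta> \<gamma> k) \<tau> = {}))"

definition subcritical_fold :: "real \<Rightarrow> real \<Rightarrow> real \<Rightarrow> real \<Rightarrow> real \<Rightarrow> bool" where
  "subcritical_fold \<delta> \<gamma> k \<tau>0 s0 \<longleftrightarrow> fold_point \<delta> \<gamma> k \<tau>0 s0 \<and>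
     (\<exists>U. open U \<and> (\<tau>0, cis s0) \<in> U \<and>
        (\<exists>\<epsilon>>0. \<forall>\<tau>. \<tau>0 - \<epsilon> < \<tau> \<and> \<tau> < \<tau>0 \<and> 0 < \<tau> \<longrightarrow> card (fibre (U \<inter> Zset \<delta> \<gamma> k) \<tau>) = 2) \<and>
        card (fibre (U \<inter> Zset \<delta> \<gamma> k) \<tau>0) = 1 \<and>
        (\<exists>\<epsilon>>0. \<forall>\<tau>. \<tau>0 < \<tau> \<and> \<tau> < \<tau>0 + \<epsilon> \<and> \<tau> \<le> 1 \<longrightarrow> fibre (U \<inter> Zset \<delta> \<gamma> k) \<tau> = {}))"

end

theory Submission imports Defs begin

definition ww :: "real \<Rightarrow> real \<Rightarrow> real \<Rightarrow> real \<Rightarrow> real" where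
  "ww \<delta> \<gamma> k \<tau> = (FF \<delta> \<tau> / \<gamma> - 1) / k"

lemma pexp_lt: "\<delta> > 1 \<Longrightarrow> pexp \<delta> < \<delta>"
proof -
  assume "\<delta> > 1"
  then have "\<delta> < \<delta>*\<delta>" using mult_strict_right_mono[of 1 \<delta> \<delta>] by simp
  then show ?thesis using \<open>\<delta> > 1\<close> unfolding pexp_def power2_eq_square by linarith
qed

lemma gfun_zero:
  assumes "0 < \<tau>" "k > 1" "\<gamma> > 0"
  shows "gfun \<delta> \<gamma> k \<tau> s = 0 \<longleftrightarrow> sin s = ww \<delta> \<gamma> k \<tau>"
proof -
  define e where "e = \<delta>^2 - \<delta>"
  have 1: "\<tau> powr (\<delta>^2) = \<tau> powr e * \<tau> powr \<delta>"
    unfolding e_def by (simp add: powr_add[symmetric])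
  have 2: "\<tau> = \<tau> powr e * \<tau> powr (pexp \<delta>)"
    using assms unfolding e_def pexp_def by (simp add: powr_add[symmetric])
  have "gfun \<delta> \<gamma> k \<tau> s = \<tau> powr e * (\<gamma> * (1 + k * sin s) - FF \<delta> \<tau>)"
    unfolding gfun_def FF_def e_def[symmetric]
    by (subst 1, subst (3) 2) (simp add: algebra_simps)
  moreover have "\<tau> powr e > 0" using assms by simp
  ultimately have "gfun \<delta> \<gamma> k \<tau> s = 0 \<longleftrightarrow> \<gamma> * (1 + k * sin s) = FF \<delta> \<tau>" by simp
  also have "\<dots> \<longleftrightarrow> sin s = ww \<delta> \<gamma> k \<tau>"
    using assms unfolding ww_def by (auto simp: field_simps)
  finally show ?thesis .
qed

lemma memZ:
  assumes "k > 1" "\<gamma> > 0"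
  shows "(\<tau>, z) \<in> Zset \<delta> \<gamma> k \<longleftrightarrow> 0 < \<tau> \<and> \<tau> \<le> 1 \<and> cmod z = 1 \<and> Im z = ww \<delta> \<gamma> k \<tau>"
proof
  assume "(\<tau>, z) \<in> Zset \<delta> \<gamma> k"
  then obtain s where "z = cis s" "0 < \<tau>" "\<tau> \<le> 1" "gfun \<delta> \<gamma> k \<tau> s = 0"
    unfolding Zset_def by auto
  then show "0 < \<tau> \<and> \<tau> \<le> 1 \<and> cmod z = 1 \<and> Im z = ww \<delta> \<gamma> k \<tau>"
    using gfun_zero[OF _ assms] by auto
next
  assume h: "0 < \<tau> \<and> \<tau> \<le> 1 \<and> cmod z = 1 \<and> Im z = ww \<delta> \<gamma> k \<tau>"
  then have z0: "z \<noteq> 0" by auto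
  have "cis (Arg z) = z" using cis_Arg[OF z0] h by (simp add: sgn_div_norm)
  moreover have "sin (Arg z) = Im z"
  proof -
    have "sin (Arg z) = Im (cis (Arg z))" by simp
    then show ?thesis using \<open>cis (Arg z) = z\<close> by simp
  qed
  ultimately show "(\<tau>, z) \<in> Zset \<delta> \<gamma> k"
    unfolding Zset_def using h gfun_zero[OF _ assms, of \<tau> \<delta> "Arg z"] by force
qed

lemma circle_set:
  fixes v :: real
  shows "{z. cmod z = 1 \<and> Im z = v} = (if \<bar>v\<bar> \<le> 1 then
     {complex_of_real (sqrt (1 - v^2)) + \<i> * complex_of_real v,
      - complex_of_real (sqrt (1 - v^2)) + \<i> * complex_of_real v} else {})"
proof -
  have "cmod z = 1 \<longleftrightarrow> (Re z)^2 + (Im z)^2 = 1" for z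
    by (metis cmod_power2 norm_ge_zero power_one real_sqrt_eq_iff real_sqrt_unique zero_le_one sqrt_le_D)
  show ?thesis
  proof (cases "\<bar>v\<bar> \<le> 1")
    case True
    have v2: "v^2 \<le> 1" using True abs_le_square_iff[of v 1] by simp
    have "z \<in> {z. cmod z = 1 \<and> Im z = v} \<longleftrightarrow> z = complex_of_real (sqrt (1 - v^2)) + \<i> * complex_of_real v
        \<or> z = - complex_of_real (sqrt (1 - v^2)) + \<i> * complex_of_real v" for z
    proof -
      have "(Re z)^2 + v^2 = 1 \<longleftrightarrow> Re z = sqrt (1 - v^2) \<or> Re z = - sqrt (1 - v^2)"
        using v2 by (smt (verit) real_sqrt_abs real_sqrt_pow2 power2_minus)
      then show ?thesis using \<open>\<And>z. cmod z = 1 \<longleftrightarrow> _\<close>[of z]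
        by (auto simp: complex_eq_iff)
    qed
    then have "{z. cmod z = 1 \<and> Im z = v} = {complex_of_real (sqrt (1 - v^2)) + \<i> * complex_of_real v,
      - complex_of_real (sqrt (1 - v^2)) + \<i> * complex_of_real v}" by blast
    then show ?thesis using True by simp
  next
    case False
    have "(Re z)^2 + v^2 \<noteq> 1" for z
    proof -
      have "1 < \<bar>v\<bar>" using False by simp
      then have "1^2 < \<bar>v\<bar>^2" by (intro power_strict_mono) auto
      then have "v^2 > 1" by simp
      moreover have "(Re z)^2 \<ge> 0" by simp
      ultimately show ?thesis by linarith
    qed
    then have "{z. cmod z = 1 \<and> Im z = v} = {}" using \<open>\<And>z. cmod z = 1 \<longleftrightarrow> _\<close> by force
    then show ?thesis using False by simp
  qed
qed

lemma FF_nonneg: "\<delta> > 1 \<Longrightarrow> 0 < \<tau> \<Longrightarrow> \<tau> \<le> 1 \<Longrightarrow> FF \<delta> \<tau> \<ge> 0"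
  unfolding FF_def using powr_mono'[of "pexp \<delta>" \<delta> \<tau>] pexp_lt[of \<delta>] by simp

lemma FF_one: "FF \<delta> 1 = 0" by (simp add: FF_def)

lemma FF_le1: "0 < \<tau> \<Longrightarrow> FF \<delta> \<tau> \<le> \<tau> powr (pexp \<delta>)"
  unfolding FF_def by simp

lemma FF_cont: "continuous_on {0<..} (FF \<delta>)"
  unfolding FF_def by (intro continuous_intros) auto

lemma FF_isCont: "0 < \<tau> \<Longrightarrow> isCont (FF \<delta>) \<tau>"
  using FF_cont[of \<delta>] by (simp add: continuous_on_eq_continuous_at)

lemma FF_deriv: "0 < \<tau> \<Longrightarrow>
   (FF \<delta> has_real_derivative (pexp \<delta> * \<tau> powr (pexp \<delta> - 1) - \<delta> * \<tau> powr (\<delta> - 1))) (at \<tau>)"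
  unfolding FF_def[abs_def]
  by (intro derivative_intros has_real_derivative_powr) auto

lemma pexp_pos: "1 < \<delta> \<Longrightarrow> \<delta> < Phi \<Longrightarrow> pexp \<delta> > 0"
proof -
  assume a: "1 < \<delta>" "\<delta> < Phi"
  have s5: "sqrt 5 ^ 2 = 5" by simp
  have "(\<delta> - Phi) * (\<delta> - (1 - Phi)) = \<delta>^2 - \<delta> - 1"
    unfolding Phi_def using s5 by (simp add: algebra_simps power2_eq_square field_simps)
  moreover have "(\<delta> - Phi) * (\<delta> - (1 - Phi)) < 0"
  proof (rule mult_neg_pos)
    have h: "\<And>s::real. s \<ge> 0 \<Longrightarrow> \<delta> - (1 - (1+s)/2) > 0" using a(1) by (simp add: field_simps)
    show "\<delta> - (1 - Phi) > 0" using h[of "sqrt 5"] unfolding Phi_def by simp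
  qed (use a in simp)
  ultimately show ?thesis unfolding pexp_def by simp
qed

lemma pexp_neg: "Phi < \<delta> \<Longrightarrow> pexp \<delta> < 0"
proof -
  assume a: "Phi < \<delta>"
  have s5: "sqrt 5 ^ 2 = 5" by simp
  have "(\<delta> - Phi) * (\<delta> - (1 - Phi)) = \<delta>^2 - \<delta> - 1"
    unfolding Phi_def using s5 by (simp add: algebra_simps power2_eq_square field_simps)
  moreover have "Phi \<ge> 1/2" unfolding Phi_def by simp
  moreover have "(\<delta> - Phi) * (\<delta> - (1 - Phi)) > 0"
    using a \<open>Phi \<ge> 1/2\<close> by (intro mult_pos_pos) auto
  ultimately show ?thesis unfolding pexp_def by simp
qed

definition crit :: "real \<Rightarrow> real" where
  "crit \<delta> = (pexp \<delta> / \<delta>) powr (1 / (\<delta> - pexp \<delta>))"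

lemma FF_deriv': "0 < \<tau> \<Longrightarrow>
   (FF \<delta> has_real_derivative (\<tau> powr (pexp \<delta> - 1) * (pexp \<delta> - \<delta> * \<tau> powr (\<delta> - pexp \<delta>)))) (at \<tau>)"
proof -
  assume t: "0 < \<tau>"
  have "\<tau> powr (\<delta> - 1) = \<tau> powr (pexp \<delta> - 1) * \<tau> powr (\<delta> - pexp \<delta>)"
    by (simp add: powr_add[symmetric])
  then show ?thesis using FF_deriv[OF t, of \<delta>] by (simp add: algebra_simps)
qed

lemma crit_props:
  assumes "1 < \<delta>" "0 < pexp \<delta>"
  shows "0 < crit \<delta>" "crit \<delta> < 1" "crit \<delta> powr (\<delta> - pexp \<delta>) = pexp \<delta> / \<delta>"
proof -
  have pd: "pexp \<delta> < \<delta>" using pexp_lt assms by auto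
  have q: "0 < pexp \<delta> / \<delta>" "pexp \<delta> / \<delta> < 1" using assms pd by auto
  show "0 < crit \<delta>" unfolding crit_def using q assms by simp
  show "crit \<delta> < 1" unfolding crit_def using q pd
    by (metis diff_gt_0_iff_gt powr_less_mono2 powr_one_eq_one zero_less_divide_1_iff order.strict_implies_order)
  show "crit \<delta> powr (\<delta> - pexp \<delta>) = pexp \<delta> / \<delta>"
    unfolding crit_def using q pd assms by (simp add: powr_powr)
qed

lemma deriv_pos:
  assumes "1 < \<delta>" "0 < pexp \<delta>" "0 < \<tau>" "\<tau> < crit \<delta>"
  shows "\<tau> powr (pexp \<delta> - 1) * (pexp \<delta> - \<delta> * \<tau> powr (\<delta> - pexp \<delta>)) > 0"
proof -
  have pd: "pexp \<delta> < \<delta>" using pexp_lt assms by auto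
  have "\<tau> powr (\<delta> - pexp \<delta>) < crit \<delta> powr (\<delta> - pexp \<delta>)"
    using assms pd by (intro powr_less_mono2) auto
  then have "\<tau> powr (\<delta> - pexp \<delta>) < pexp \<delta> / \<delta>" using crit_props[OF assms(1,2)] by simp
  then have "\<delta> * \<tau> powr (\<delta> - pexp \<delta>) < pexp \<delta>" using assms by (simp add: field_simps)
  then show ?thesis using assms by simp
qed

lemma deriv_neg:
  assumes "1 < \<delta>" "0 < pexp \<delta>" "crit \<delta> < \<tau>"
  shows "\<tau> powr (pexp \<delta> - 1) * (pexp \<delta> - \<delta> * \<tau> powr (\<delta> - pexp \<delta>)) < 0"
proof -
  have pd: "pexp \<delta> < \<delta>" using pexp_lt assms by auto
  have c0: "0 < crit \<delta>" using crit_props[OF assms(1,2)] by simp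
  have "\<tau> powr (\<delta> - pexp \<delta>) > crit \<delta> powr (\<delta> - pexp \<delta>)"
    using assms pd c0 by (intro powr_less_mono2) auto
  then have "\<tau> powr (\<delta> - pexp \<delta>) > pexp \<delta> / \<delta>" using crit_props[OF assms(1,2)] by simp
  then have "\<delta> * \<tau> powr (\<delta> - pexp \<delta>) > pexp \<delta>" using assms by (simp add: field_simps)
  then show ?thesis using assms c0 by (simp add: mult_pos_neg)
qed

lemma FF_cont_Icc: "0 < a \<Longrightarrow> continuous_on {a..b} (FF \<delta>)"
  by (rule continuous_on_subset[OF FF_cont]) auto

lemma FF_inc:
  assumes "1 < \<delta>" "0 < pexp \<delta>" "0 < a" "a < b" "b \<le> crit \<delta>"
  shows "FF \<delta> a < FF \<delta> b"
proof (rule DERIV_pos_imp_increasing_open[OF assms(4)])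
  fix x assume "a < x" "x < b"
  then show "\<exists>y. (FF \<delta> has_real_derivative y) (at x) \<and> y > 0"
    using FF_deriv'[of x \<delta>] deriv_pos[OF assms(1,2), of x] assms by auto
qed (use FF_cont_Icc assms in auto)

lemma FF_dec:
  assumes "1 < \<delta>" "0 < pexp \<delta>" "crit \<delta> \<le> a" "a < b"
  shows "FF \<delta> a > FF \<delta> b"
proof (rule DERIV_neg_imp_decreasing_open[OF assms(4)])
  have "0 < a" using crit_props[OF assms(1,2)] assms by auto
  fix x assume "a < x" "x < b"
  then show "\<exists>y. (FF \<delta> has_real_derivative y) (at x) \<and> y < 0"
    using FF_deriv'[of x \<delta>] deriv_neg[OF assms(1,2), of x] assms \<open>0 < a\<close> by auto
next
  show "continuous_on {a..b} (FF \<delta>)" using crit_props[OF assms(1,2)] assms by (intro FF_cont_Icc) auto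
qed

lemma FF_dec2:
  assumes "1 < \<delta>" "pexp \<delta> < 0" "0 < a" "a < b"
  shows "FF \<delta> a > FF \<delta> b"
proof (rule DERIV_neg_imp_decreasing_open[OF assms(4)])
  fix x assume "a < x" "x < b"
  then have "pexp \<delta> * x powr (pexp \<delta> - 1) - \<delta> * x powr (\<delta> - 1) < 0"
    using assms by (smt (verit) mult_neg_pos mult_pos_pos powr_gt_zero)
  then show "\<exists>y. (FF \<delta> has_real_derivative y) (at x) \<and> y < 0"
    using FF_deriv[of x \<delta>] assms \<open>a < x\<close> by auto
qed (use FF_cont_Icc assms in auto)

definition aa :: "real \<Rightarrow> real \<Rightarrow> real \<Rightarrow> real \<Rightarrow> real" where
  "aa \<delta> \<gamma> k \<tau> = sqrt (1 - (ww \<delta> \<gamma> k \<tau>)^2)"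

definition PP :: "real \<Rightarrow> real \<Rightarrow> real \<Rightarrow> real \<Rightarrow> real \<times> complex" where
  "PP \<delta> \<gamma> k \<tau> = (\<tau>, complex_of_real (aa \<delta> \<gamma> k \<tau>) + \<i> * complex_of_real (ww \<delta> \<gamma> k \<tau>))"

definition NN :: "real \<Rightarrow> real \<Rightarrow> real \<Rightarrow> real \<Rightarrow> real \<times> complex" where
  "NN \<delta> \<gamma> k \<tau> = (\<tau>, - complex_of_real (aa \<delta> \<gamma> k \<tau>) + \<i> * complex_of_real (ww \<delta> \<gamma> k \<tau>))"

lemma fibre_eq:
  assumes "k > 1" "\<gamma> > 0"
  shows "fibre (Zset \<delta> \<gamma> k) \<tau> = (if 0 < \<tau> \<and> \<tau> \<le> 1 \<and> \<bar>ww \<delta> \<gamma> k \<tau>\<bar> \<le> 1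
     then {snd (PP \<delta> \<gamma> k \<tau>), snd (NN \<delta> \<gamma> k \<tau>)} else {})"
proof -
  have "fibre (Zset \<delta> \<gamma> k) \<tau> = (if 0 < \<tau> \<and> \<tau> \<le> 1 then {z. cmod z = 1 \<and> Im z = ww \<delta> \<gamma> k \<tau>} else {})"
    unfolding fibre_def using memZ[OF assms] by auto
  then show ?thesis unfolding circle_set PP_def NN_def aa_def by simp
qed

lemma ww_gt:
  assumes "k > 1" "\<gamma> > 0" "\<delta> > 1" "0 < \<tau>" "\<tau> \<le> 1"
  shows "ww \<delta> \<gamma> k \<tau> > -1"
proof -
  have "FF \<delta> \<tau> / \<gamma> \<ge> 0" using FF_nonneg[OF assms(3-5)] assms by simp
  then have "FF \<delta> \<tau> / \<gamma> - 1 > - k" using assms by linarith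
  then show ?thesis unfolding ww_def using assms by (simp add: field_simps)
qed

lemma ww_cmp:
  assumes "k > 1" "\<gamma> > 0"
  shows "ww \<delta> \<gamma> k \<tau> < 1 \<longleftrightarrow> FF \<delta> \<tau> < \<gamma> * (1 + k)"
    "ww \<delta> \<gamma> k \<tau> = 1 \<longleftrightarrow> FF \<delta> \<tau> = \<gamma> * (1 + k)"
    "ww \<delta> \<gamma> k \<tau> > 1 \<longleftrightarrow> FF \<delta> \<tau> > \<gamma> * (1 + k)"
  using assms unfolding ww_def by (auto simp: field_simps)

lemma fibre_card2:
  assumes "k > 1" "\<gamma> > 0" "\<delta> > 1" "0 < \<tau>" "\<tau> \<le> 1" "FF \<delta> \<tau> < \<gamma> * (1 + k)"
  shows "card (fibre (Zset \<delta> \<gamma> k) \<tau>) = 2"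
proof -
  have w1: "ww \<delta> \<gamma> k \<tau> < 1" using ww_cmp[OF assms(1,2)] assms by simp
  have w2: "ww \<delta> \<gamma> k \<tau> > -1" using ww_gt assms by simp
  have "\<bar>ww \<delta> \<gamma> k \<tau>\<bar> < 1" using w1 w2 by auto
  then have "(ww \<delta> \<gamma> k \<tau>)^2 < 1" by (simp add: abs_square_less_1)
  then have "aa \<delta> \<gamma> k \<tau> > 0" unfolding aa_def by simp
  then have "snd (PP \<delta> \<gamma> k \<tau>) \<noteq> snd (NN \<delta> \<gamma> k \<tau>)"
    unfolding PP_def NN_def by (auto simp: complex_eq_iff)
  then show ?thesis using fibre_eq[OF assms(1,2)] assms w1 w2 by auto
qed

lemma fibre_one:
  assumes "k > 1" "\<gamma> > 0" "0 < \<tau>" "\<tau> \<le> 1" "FF \<delta> \<tau> = \<gamma> * (1 + k)"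
  shows "fibre (Zset \<delta> \<gamma> k) \<tau> = {cis (pi/2)}"
proof -
  have w1: "ww \<delta> \<gamma> k \<tau> = 1" using ww_cmp[OF assms(1,2)] assms by simp
  then have "aa \<delta> \<gamma> k \<tau> = 0" unfolding aa_def by simp
  then show ?thesis using fibre_eq[OF assms(1,2)] assms w1 unfolding PP_def NN_def
    by (simp add: complex_eq_iff)
qed

lemma fibre_empty:
  assumes "k > 1" "\<gamma> > 0" "FF \<delta> \<tau> > \<gamma> * (1 + k)"
  shows "fibre (Zset \<delta> \<gamma> k) \<tau> = {}"
proof -
  have w1: "ww \<delta> \<gamma> k \<tau> > 1" using ww_cmp[OF assms(1,2)] assms by simp
  then show ?thesis using fibre_eq[OF assms(1,2)] by simp
qed

lemma Z_eq:
  assumes "k > 1" "\<gamma> > 0" "\<delta> > 1"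
  shows "Zset \<delta> \<gamma> k = PP \<delta> \<gamma> k ` {\<tau>. 0 < \<tau> \<and> \<tau> \<le> 1 \<and> ww \<delta> \<gamma> k \<tau> \<le> 1}
                     \<union> NN \<delta> \<gamma> k ` {\<tau>. 0 < \<tau> \<and> \<tau> \<le> 1 \<and> ww \<delta> \<gamma> k \<tau> \<le> 1}"
proof -
  have "(\<tau>, z) \<in> Zset \<delta> \<gamma> k \<longleftrightarrow> (\<tau>, z) \<in> PP \<delta> \<gamma> k ` {\<tau>. 0 < \<tau> \<and> \<tau> \<le> 1 \<and> ww \<delta> \<gamma> k \<tau> \<le> 1}
                     \<union> NN \<delta> \<gamma> k ` {\<tau>. 0 < \<tau> \<and> \<tau> \<le> 1 \<and> ww \<delta> \<gamma> k \<tau> \<le> 1}" for \<tau> z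
  proof -
    have "(\<tau>, z) \<in> Zset \<delta> \<gamma> k \<longleftrightarrow> z \<in> fibre (Zset \<delta> \<gamma> k) \<tau>" by (simp add: fibre_def)
    also have "\<dots> \<longleftrightarrow> 0 < \<tau> \<and> \<tau> \<le> 1 \<and> ww \<delta> \<gamma> k \<tau> \<le> 1 \<and>
        (z = snd (PP \<delta> \<gamma> k \<tau>) \<or> z = snd (NN \<delta> \<gamma> k \<tau>))"
      using fibre_eq[OF assms(1,2), of \<delta> \<tau>] ww_gt[OF assms, of \<tau>] by auto
    also have "\<dots> \<longleftrightarrow> (\<tau>, z) \<in> PP \<delta> \<gamma> k ` {\<tau>. 0 < \<tau> \<and> \<tau> \<le> 1 \<and> ww \<delta> \<gamma> k \<tau> \<le> 1}
                     \<union> NN \<delta> \<gamma> k ` {\<tau>. 0 < \<tau> \<and> \<tau> \<le> 1 \<and> ww \<delta> \<gamma> k \<tau> \<le> 1}"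
      unfolding PP_def NN_def by auto
    finally show ?thesis .
  qed
  then show ?thesis by auto
qed

lemma ww_cont: "continuous_on {0<..} (ww \<delta> \<gamma> k)"
  unfolding ww_def[abs_def] divide_inverse by (intro continuous_intros FF_cont)

lemma PP_cont: "continuous_on {0<..} (PP \<delta> \<gamma> k)"
  unfolding PP_def[abs_def] aa_def by (intro continuous_intros ww_cont continuous_on_id)

lemma NN_cont: "continuous_on {0<..} (NN \<delta> \<gamma> k)"
  unfolding NN_def[abs_def] aa_def by (intro continuous_intros ww_cont continuous_on_id)

lemma conn_PP: "I \<subseteq> {0<..} \<Longrightarrow> connected I \<Longrightarrow> connected (PP \<delta> \<gamma> k ` I)"
  by (rule connected_continuous_image[OF continuous_on_subset[OF PP_cont]])

lemma conn_NN: "I \<subseteq> {0<..} \<Longrightarrow> connected I \<Longrightarrow> connected (NN \<delta> \<gamma> k ` I)"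
  by (rule connected_continuous_image[OF continuous_on_subset[OF NN_cont]])

lemma comps2:
  fixes f :: "'a::topological_space \<Rightarrow> real"
  assumes "S = A \<union> B" "connected A" "connected B" "A \<noteq> {}" "B \<noteq> {}" "continuous_on S f"
    "\<forall>x\<in>A. f x < c" "\<forall>x\<in>B. f x > c"
  shows "components S = {A, B}" "A \<noteq> B"
proof -
  have key: "D \<subseteq> A \<or> D \<subseteq> B" if "connected D" "D \<subseteq> S" for D
  proof (rule ccontr)
    assume "\<not> (D \<subseteq> A \<or> D \<subseteq> B)"
    then obtain x y where xy: "x \<in> D" "y \<in> D" "x \<notin> A" "y \<notin> B" by auto
    then have "x \<in> B" "y \<in> A" using that assms(1) by auto
    then have fx: "f x > c" "f y < c" using assms by auto
    have "connected (f ` D)"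
      using that by (intro connected_continuous_image continuous_on_subset[OF assms(6)])
    then have "{f y..f x} \<subseteq> f ` D" using xy by (intro connected_contains_Icc) auto
    then have "c \<in> f ` D" using fx by auto
    then obtain d where "d \<in> D" "f d = c" by auto
    then show False using that assms(1,7,8) by fastforce
  qed
  have disj: "A \<inter> B = {}" using assms(7,8) by fastforce
  show "A \<noteq> B" using disj assms(4) by auto
  have AC: "A \<in> components S"
    unfolding in_components_maximal
  proof (intro conjI allI impI)
    fix D assume D: "D \<noteq> {} \<and> A \<subseteq> D \<and> D \<subseteq> S \<and> connected D"
    then have "D \<subseteq> A \<or> D \<subseteq> B" using key by auto
    then show "D = A" using D disj assms(4) by blast
  qed (use assms in auto)
  have BC: "B \<in> components S"
    unfolding in_components_maximal
  proof (intro conjI allI impI)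
    fix D assume D: "D \<noteq> {} \<and> B \<subseteq> D \<and> D \<subseteq> S \<and> connected D"
    then have "D \<subseteq> A \<or> D \<subseteq> B" using key by auto
    then show "D = B" using D disj assms(5) by blast
  qed (use assms in auto)
  show "components S = {A, B}"
  proof
    show "{A, B} \<subseteq> components S" using AC BC by auto
    show "components S \<subseteq> {A, B}"
    proof
      fix C assume C: "C \<in> components S"
      then have Cp: "C \<noteq> {}" "C \<subseteq> S" "connected C"
        "\<And>D. D \<noteq> {} \<and> C \<subseteq> D \<and> D \<subseteq> S \<and> connected D \<Longrightarrow> D = C"
        unfolding in_components_maximal by auto
      then have "C \<subseteq> A \<or> C \<subseteq> B" using key by auto
      then show "C \<in> {A, B}" using Cp(4)[of A] Cp(4)[of B] Cp(1) assms by auto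
    qed
  qed
qed

lemma gfun_deriv:
  "((\<lambda>s. gfun \<delta> \<gamma> k \<tau> s) has_real_derivative (\<gamma> * \<tau> powr (\<delta>^2 - \<delta>) * (k * cos s))) (at s)"
  unfolding gfun_def by (auto intro!: derivative_eq_intros)

lemma fibre_PP: "fibre (PP \<delta> \<gamma> k ` J) \<tau> = (if \<tau> \<in> J then {snd (PP \<delta> \<gamma> k \<tau>)} else {})"
  unfolding fibre_def PP_def by auto

lemma fibre_NN: "fibre (NN \<delta> \<gamma> k ` J) \<tau> = (if \<tau> \<in> J then {snd (NN \<delta> \<gamma> k \<tau>)} else {})"
  unfolding fibre_def NN_def by auto

lemma PP_eq_NN: "ww \<delta> \<gamma> k \<tau> = 1 \<Longrightarrow> PP \<delta> \<gamma> k \<tau> = NN \<delta> \<gamma> k \<tau>"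
  unfolding PP_def NN_def aa_def by simp

lemma fold_at:
  assumes "k > 1" "\<gamma> > 0" "0 < \<tau>" "\<tau> \<le> 1" "FF \<delta> \<tau> = \<gamma> * (1 + k)"
  shows "fold_point \<delta> \<gamma> k \<tau> (pi/2)"
proof -
  have "ww \<delta> \<gamma> k \<tau> = 1" using ww_cmp[OF assms(1,2)] assms by simp
  then have "gfun \<delta> \<gamma> k \<tau> (pi/2) = 0" using gfun_zero[OF assms(3,1,2)] by simp
  moreover have "((\<lambda>s. gfun \<delta> \<gamma> k \<tau> s) has_real_derivative 0) (at (pi/2))"
    using gfun_deriv[of \<delta> \<gamma> k \<tau> "pi/2"] by simp
  ultimately show ?thesis unfolding fold_point_def using assms by simp
qed

lemma MF_bound:
  assumes "\<delta> > 1" "0 < pexp \<delta>" "0 < \<tau>" "\<tau> \<le> 1"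
  shows "FF \<delta> \<tau> \<le> MF \<delta>"
proof -
  have "bdd_above (FF \<delta> ` {0<..1})"
  proof (rule bdd_aboveI2)
    fix x :: real assume "x \<in> {0<..1}"
    then show "FF \<delta> x \<le> 1" using FF_le1[of x \<delta>] powr_le1[of "pexp \<delta>" x] assms by auto
  qed
  then show ?thesis unfolding MF_def using assms by (intro cSup_upper) auto
qed

lemma caseA:
  fixes k \<gamma> \<delta> :: real
  assumes k1: "k > 1" and g0: "\<gamma> > 0" and d1: "\<delta> > 1" and dP: "\<delta> < Phi" and gp: "\<gamma> > gamma_plus k \<delta>"
  shows "(\<forall>\<tau>. 0 < \<tau> \<and> \<tau> \<le> 1 \<longrightarrow> card (fibre (Zset \<delta> \<gamma> k) \<tau>) = 2) \<and>
       \<not> (\<exists>\<tau> s. fold_point \<delta> \<gamma> k \<tau> s) \<and>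
       card (components (Zset \<delta> \<gamma> k)) = 2 \<and>
       (\<forall>c\<in>components (Zset \<delta> \<gamma> k). \<forall>\<tau>. 0 < \<tau> \<and> \<tau> \<le> 1 \<longrightarrow> card (fibre c \<tau>) = 1)"
proof -
  have p0: "0 < pexp \<delta>" using pexp_pos d1 dP by auto
  have "MF \<delta> < \<gamma> * (1 + k)" using gp k1 unfolding gamma_plus_def by (simp add: field_simps)
  then have bnd: "FF \<delta> \<tau> < \<gamma> * (1 + k)" if "0 < \<tau>" "\<tau> \<le> 1" for \<tau>
    using MF_bound[OF d1 p0 that] by linarith
  have wlt: "ww \<delta> \<gamma> k \<tau> < 1" if "0 < \<tau>" "\<tau> \<le> 1" for \<tau>
    using ww_cmp[OF k1 g0] bnd[OF that] by simp
  have wgt: "ww \<delta> \<gamma> k \<tau> > -1" if "0 < \<tau>" "\<tau> \<le> 1" for \<tau>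
    using ww_gt[OF k1 g0 d1 that] .
  have P1: "\<forall>\<tau>. 0 < \<tau> \<and> \<tau> \<le> 1 \<longrightarrow> card (fibre (Zset \<delta> \<gamma> k) \<tau>) = 2"
    using fibre_card2[OF k1 g0 d1] bnd by auto
  have P2: "\<not> (\<exists>\<tau> s. fold_point \<delta> \<gamma> k \<tau> s)"
  proof
    assume "\<exists>\<tau> s. fold_point \<delta> \<gamma> k \<tau> s"
    then obtain \<tau> s where f: "fold_point \<delta> \<gamma> k \<tau> s" by auto
    then have t: "0 < \<tau>" "\<tau> \<le> 1" and gz: "gfun \<delta> \<gamma> k \<tau> s = 0"
      and d: "((\<lambda>s. gfun \<delta> \<gamma> k \<tau> s) has_real_derivative 0) (at s)"
      unfolding fold_point_def by auto
    have "\<gamma> * \<tau> powr (\<delta>^2 - \<delta>) * (k * cos s) = 0"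
      using DERIV_unique[OF gfun_deriv d] .
    then have c: "cos s = 0" using g0 k1 t by simp
    have "sin s = ww \<delta> \<gamma> k \<tau>" using gfun_zero[OF t(1) k1 g0] gz by simp
    moreover have "(sin s)^2 = 1" using sin_cos_squared_add[of s] c by simp
    ultimately have "(ww \<delta> \<gamma> k \<tau>)^2 = 1" by simp
    moreover have "\<bar>ww \<delta> \<gamma> k \<tau>\<bar> < 1" using wlt[OF t] wgt[OF t] by auto
    ultimately show False by (simp add: abs_square_less_1[symmetric])
  qed
  define J where "J = {0<..(1::real)}"
  have J: "{\<tau>. 0 < \<tau> \<and> \<tau> \<le> 1 \<and> ww \<delta> \<gamma> k \<tau> \<le> 1} = J"
    unfolding J_def using wlt by force
  have Z: "Zset \<delta> \<gamma> k = PP \<delta> \<gamma> k ` J \<union> NN \<delta> \<gamma> k ` J"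
    using Z_eq[OF k1 g0 d1] J by simp
  have apos: "aa \<delta> \<gamma> k \<tau> > 0" if "\<tau> \<in> J" for \<tau>
  proof -
    have "\<bar>ww \<delta> \<gamma> k \<tau>\<bar> < 1" using that wlt wgt unfolding J_def by fastforce
    then have "(ww \<delta> \<gamma> k \<tau>)^2 < 1" by (simp add: abs_square_less_1)
    then show ?thesis unfolding aa_def by simp
  qed
  have comp: "components (Zset \<delta> \<gamma> k) = {PP \<delta> \<gamma> k ` J, NN \<delta> \<gamma> k ` J}"
    "PP \<delta> \<gamma> k ` J \<noteq> NN \<delta> \<gamma> k ` J"
  proof -
    have "continuous_on (Zset \<delta> \<gamma> k) (\<lambda>p. - Re (snd p))"
      by (intro continuous_intros)
    moreover have "\<forall>x\<in>PP \<delta> \<gamma> k ` J. - Re (snd x) < 0" using apos unfolding PP_def by auto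
    moreover have "\<forall>x\<in>NN \<delta> \<gamma> k ` J. - Re (snd x) > 0" using apos unfolding NN_def by auto
    moreover have "connected (PP \<delta> \<gamma> k ` J)" unfolding J_def by (intro conn_PP) auto
    moreover have "connected (NN \<delta> \<gamma> k ` J)" unfolding J_def by (intro conn_NN) auto
    moreover have "J \<noteq> {}" unfolding J_def by auto
    ultimately show "components (Zset \<delta> \<gamma> k) = {PP \<delta> \<gamma> k ` J, NN \<delta> \<gamma> k ` J}"
      "PP \<delta> \<gamma> k ` J \<noteq> NN \<delta> \<gamma> k ` J"
      using comps2[OF Z, of "\<lambda>p. - Re (snd p)" 0] by auto
  qed
  have P3: "card (components (Zset \<delta> \<gamma> k)) = 2" using comp by simp
  have P4: "\<forall>c\<in>components (Zset \<delta> \<gamma> k). \<forall>\<tau>. 0 < \<tau> \<and> \<tau> \<le> 1 \<longrightarrow> card (fibre c \<tau>) = 1"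
    using comp(1) by (auto simp: fibre_PP fibre_NN J_def)
  show ?thesis using P1 P2 P3 P4 by blast
qed

lemma caseB:
  fixes k \<gamma> \<delta> :: real
  assumes k1: "k > 1" and g0: "\<gamma> > 0" and d1: "\<delta> > 1" and dP: "\<delta> < Phi" and gp: "\<gamma> < gamma_plus k \<delta>"
  shows "\<exists>\<tau>1 \<tau>2. 0 < \<tau>1 \<and> \<tau>1 < \<tau>2 \<and> \<tau>2 < 1 \<and>
          (\<forall>\<tau>. (0 < \<tau> \<and> \<tau> < \<tau>1) \<or> (\<tau>2 < \<tau> \<and> \<tau> \<le> 1) \<longrightarrow> card (fibre (Zset \<delta> \<gamma> k) \<tau>) = 2) \<and>
          fibre (Zset \<delta> \<gamma> k) \<tau>1 = {cis (pi/2)} \<and>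
          fibre (Zset \<delta> \<gamma> k) \<tau>2 = {cis (pi/2)} \<and>
          (\<forall>\<tau>. \<tau>1 < \<tau> \<and> \<tau> < \<tau>2 \<longrightarrow> fibre (Zset \<delta> \<gamma> k) \<tau> = {}) \<and>
          subcritical_fold \<delta> \<gamma> k \<tau>1 (pi/2) \<and>
          supercritical_fold \<delta> \<gamma> k \<tau>2 (pi/2) \<and>
          (\<exists>A B. components (Zset \<delta> \<gamma> k) = {A, B} \<and> A \<noteq> B \<and>
                 A \<subseteq> {p. fst p \<le> \<tau>1} \<and> B \<subseteq> {p. fst p \<ge> \<tau>2})"
proof -
  have p0: "0 < pexp \<delta>" using pexp_pos d1 dP by auto
  define c where "c = crit \<delta>"
  define L where "L = \<gamma> * (1 + k)"
  have L0: "L > 0" unfolding L_def using g0 k1 by simp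
  have c0: "0 < c" "c < 1" unfolding c_def using crit_props[OF d1 p0] by auto
  have maxc: "FF \<delta> \<tau> \<le> FF \<delta> c" if "0 < \<tau>" "\<tau> \<le> 1" for \<tau>
  proof -
    consider "\<tau> < c" | "\<tau> = c" | "c < \<tau>" by linarith
    then show ?thesis
    proof cases
      case 1 then show ?thesis using FF_inc[OF d1 p0 that(1), of c] unfolding c_def by simp
    next
      case 3 then show ?thesis using FF_dec[OF d1 p0, of c \<tau>] unfolding c_def by simp
    qed simp
  qed
  have "MF \<delta> = FF \<delta> c" unfolding MF_def
    by (rule cSup_eq_maximum) (use c0 maxc in auto)
  then have Lc: "L < FF \<delta> c" using gp k1 unfolding gamma_plus_def L_def by (simp add: field_simps)
  define ta where "ta = min (c/2) ((L/2) powr (1 / pexp \<delta>))"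
  have ta0: "0 < ta" "ta < c" unfolding ta_def using c0 L0 by auto
  have "ta powr pexp \<delta> \<le> ((L/2) powr (1 / pexp \<delta>)) powr pexp \<delta>"
    using ta0 p0 unfolding ta_def by (intro powr_mono2) auto
  also have "\<dots> = L/2" using p0 L0 by (simp add: powr_powr)
  finally have "FF \<delta> ta < L" using FF_le1[OF ta0(1), of \<delta>] L0 by linarith
  then obtain \<tau>1 where t1: "ta \<le> \<tau>1" "\<tau>1 \<le> c" "FF \<delta> \<tau>1 = L"
    using IVT'[of "FF \<delta>" ta L c] Lc ta0 FF_cont_Icc[OF ta0(1)] by auto
  have t1c: "\<tau>1 < c" using t1 Lc by (cases "\<tau>1 = c") auto
  have "FF \<delta> 1 \<le> L" using FF_one L0 by simp
  then obtain \<tau>2 where t2: "c \<le> \<tau>2" "\<tau>2 \<le> 1" "FF \<delta> \<tau>2 = L"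
    using IVT2'[of "FF \<delta>" 1 L c] Lc c0 FF_cont_Icc[OF c0(1)] by auto
  have t2c: "c < \<tau>2" using t2 Lc by (cases "\<tau>2 = c") auto
  have t21: "\<tau>2 < 1" using t2 FF_one L0 by (cases "\<tau>2 = 1") auto
  have t10: "0 < \<tau>1" using ta0 t1 by simp
  have low: "FF \<delta> \<tau> < L" if "0 < \<tau>" "\<tau> < \<tau>1" for \<tau>
    using FF_inc[OF d1 p0 that(1) that(2)] t1 unfolding c_def by simp
  have high: "FF \<delta> \<tau> < L" if "\<tau>2 < \<tau>" for \<tau>
    using FF_dec[OF d1 p0 _ that] t2 unfolding c_def by simp
  have mid: "FF \<delta> \<tau> > L" if "\<tau>1 < \<tau>" "\<tau> < \<tau>2" for \<tau>
  proof (cases "\<tau> \<le> c")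
    case True then show ?thesis using FF_inc[OF d1 p0 t10 that(1)] t1 unfolding c_def by simp
  next
    case False then show ?thesis using FF_dec[OF d1 p0 _ that(2)] t2 unfolding c_def by simp
  qed
  have Q1: "\<forall>\<tau>. (0 < \<tau> \<and> \<tau> < \<tau>1) \<or> (\<tau>2 < \<tau> \<and> \<tau> \<le> 1) \<longrightarrow> card (fibre (Zset \<delta> \<gamma> k) \<tau>) = 2"
  proof (intro allI impI)
    fix \<tau> assume h: "(0 < \<tau> \<and> \<tau> < \<tau>1) \<or> (\<tau>2 < \<tau> \<and> \<tau> \<le> 1)"
    then have "0 < \<tau>" "\<tau> \<le> 1" "FF \<delta> \<tau> < L" using low high t10 t1c t2c c0 t21 by auto
    then show "card (fibre (Zset \<delta> \<gamma> k) \<tau>) = 2" using fibre_card2[OF k1 g0 d1] unfolding L_def by auto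
  qed
  have Q2: "fibre (Zset \<delta> \<gamma> k) \<tau>1 = {cis (pi/2)}"
    using fibre_one[OF k1 g0 t10] t1 t1c c0 unfolding L_def by auto
  have Q3: "fibre (Zset \<delta> \<gamma> k) \<tau>2 = {cis (pi/2)}"
    using fibre_one[OF k1 g0 _ t2(2)] t2 t2c c0 unfolding L_def by auto
  have Q4: "\<forall>\<tau>. \<tau>1 < \<tau> \<and> \<tau> < \<tau>2 \<longrightarrow> fibre (Zset \<delta> \<gamma> k) \<tau> = {}"
    using mid fibre_empty[OF k1 g0] unfolding L_def by auto
  have t12: "\<tau>1 < \<tau>2" using t1c t2c by simp
  have Q5: "subcritical_fold \<delta> \<gamma> k \<tau>1 (pi/2)"
    unfolding subcritical_fold_def
  proof (intro conjI exI[of _ UNIV])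
    show "fold_point \<delta> \<gamma> k \<tau>1 (pi/2)" using fold_at[OF k1 g0 t10] t1 t1c c0 unfolding L_def by auto
    show "\<exists>\<epsilon>>0. \<forall>\<tau>. \<tau>1 - \<epsilon> < \<tau> \<and> \<tau> < \<tau>1 \<and> 0 < \<tau> \<longrightarrow> card (fibre (UNIV \<inter> Zset \<delta> \<gamma> k) \<tau>) = 2"
      using Q1 t10 by (intro exI[of _ \<tau>1]) auto
    show "card (fibre (UNIV \<inter> Zset \<delta> \<gamma> k) \<tau>1) = 1" using Q2 by simp
    show "\<exists>\<epsilon>>0. \<forall>\<tau>. \<tau>1 < \<tau> \<and> \<tau> < \<tau>1 + \<epsilon> \<and> \<tau> \<le> 1 \<longrightarrow> fibre (UNIV \<inter> Zset \<delta> \<gamma> k) \<tau> = {}"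
      using Q4 t12 by (intro exI[of _ "\<tau>2 - \<tau>1"]) auto
  qed auto
  have Q6: "supercritical_fold \<delta> \<gamma> k \<tau>2 (pi/2)"
    unfolding supercritical_fold_def
  proof (intro conjI exI[of _ UNIV])
    show "fold_point \<delta> \<gamma> k \<tau>2 (pi/2)" using fold_at[OF k1 g0 _ t2(2)] t2 t2c c0 unfolding L_def by auto
    show "\<exists>\<epsilon>>0. \<forall>\<tau>. \<tau>2 < \<tau> \<and> \<tau> < \<tau>2 + \<epsilon> \<and> \<tau> \<le> 1 \<longrightarrow> card (fibre (UNIV \<inter> Zset \<delta> \<gamma> k) \<tau>) = 2"
      using Q1 by (intro exI[of _ 1]) auto
    show "card (fibre (UNIV \<inter> Zset \<delta> \<gamma> k) \<tau>2) = 1" using Q3 by simp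
    show "\<exists>\<epsilon>>0. \<forall>\<tau>. \<tau>2 - \<epsilon> < \<tau> \<and> \<tau> < \<tau>2 \<and> 0 < \<tau> \<longrightarrow> fibre (UNIV \<inter> Zset \<delta> \<gamma> k) \<tau> = {}"
      using Q4 t12 by (intro exI[of _ "\<tau>2 - \<tau>1"]) auto
  qed auto
  have J: "{\<tau>. 0 < \<tau> \<and> \<tau> \<le> 1 \<and> ww \<delta> \<gamma> k \<tau> \<le> 1} = {0<..\<tau>1} \<union> {\<tau>2..1}"
  proof -
    have "ww \<delta> \<gamma> k \<tau> \<le> 1 \<longleftrightarrow> FF \<delta> \<tau> \<le> L" for \<tau>
      using ww_cmp[OF k1 g0, of \<delta> \<tau>] unfolding L_def by linarith
    moreover have "(0 < \<tau> \<and> \<tau> \<le> 1 \<and> FF \<delta> \<tau> \<le> L) \<longleftrightarrow> \<tau> \<in> {0<..\<tau>1} \<union> {\<tau>2..1}" for \<tau>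
    proof -
      consider "\<tau> < \<tau>1" | "\<tau> = \<tau>1" | "\<tau>1 < \<tau> \<and> \<tau> < \<tau>2" | "\<tau> = \<tau>2" | "\<tau>2 < \<tau>" by linarith
      then show ?thesis
      proof cases
        case 1 then show ?thesis using low[of \<tau>] t12 t21 by (auto simp: less_imp_le)
      next
        case 2 then show ?thesis using t1 t10 t12 t21 by auto
      next
        case 3 then show ?thesis using mid[of \<tau>] by auto
      next
        case 4 then show ?thesis using t2 t10 t12 by auto
      next
        case 5 then show ?thesis using high[of \<tau>] t12 t10 by (auto simp: less_imp_le)
      qed
    qed
    ultimately show ?thesis by blast
  qed
  define A where "A = PP \<delta> \<gamma> k ` {0<..\<tau>1} \<union> NN \<delta> \<gamma> k ` {0<..\<tau>1}"
  define B where "B = PP \<delta> \<gamma> k ` {\<tau>2..1} \<union> NN \<delta> \<gamma> k ` {\<tau>2..1}"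
  have Z: "Zset \<delta> \<gamma> k = A \<union> B" unfolding A_def B_def Z_eq[OF k1 g0 d1] J by auto
  have w1: "ww \<delta> \<gamma> k \<tau>1 = 1" "ww \<delta> \<gamma> k \<tau>2 = 1"
    using ww_cmp[OF k1 g0] t1 t2 unfolding L_def by auto
  have cA: "connected A" unfolding A_def
  proof (rule connected_Un)
    show "connected (PP \<delta> \<gamma> k ` {0<..\<tau>1})" by (intro conn_PP) auto
    show "connected (NN \<delta> \<gamma> k ` {0<..\<tau>1})" by (intro conn_NN) auto
    have "PP \<delta> \<gamma> k \<tau>1 \<in> PP \<delta> \<gamma> k ` {0<..\<tau>1} \<inter> NN \<delta> \<gamma> k ` {0<..\<tau>1}"
      using PP_eq_NN[OF w1(1)] t10 by (metis IntI greaterThanAtMost_iff image_eqI order_refl)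
    then show "PP \<delta> \<gamma> k ` {0<..\<tau>1} \<inter> NN \<delta> \<gamma> k ` {0<..\<tau>1} \<noteq> {}" by blast
  qed
  have cB: "connected B" unfolding B_def
  proof (rule connected_Un)
    show "connected (PP \<delta> \<gamma> k ` {\<tau>2..1})" using t12 t10 by (intro conn_PP) auto
    show "connected (NN \<delta> \<gamma> k ` {\<tau>2..1})" using t12 t10 by (intro conn_NN) auto
    have "PP \<delta> \<gamma> k \<tau>2 \<in> PP \<delta> \<gamma> k ` {\<tau>2..1} \<inter> NN \<delta> \<gamma> k ` {\<tau>2..1}"
      using PP_eq_NN[OF w1(2)] t21 by (metis IntI atLeastAtMost_iff image_eqI order_refl less_imp_le)
    then show "PP \<delta> \<gamma> k ` {\<tau>2..1} \<inter> NN \<delta> \<gamma> k ` {\<tau>2..1} \<noteq> {}" by blast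
  qed
  have Asub: "A \<subseteq> {p. fst p \<le> \<tau>1}" unfolding A_def PP_def NN_def by auto
  have Bsub: "B \<subseteq> {p. fst p \<ge> \<tau>2}" unfolding B_def PP_def NN_def by auto
  have An: "A \<noteq> {}" unfolding A_def using t10 by auto
  have Bn: "B \<noteq> {}" unfolding B_def using t21 by auto
  have hA: "\<forall>x\<in>A. fst x < (\<tau>1 + \<tau>2)/2" using Asub t12 by fastforce
  have hB: "\<forall>x\<in>B. fst x > (\<tau>1 + \<tau>2)/2" using Bsub t12 by fastforce
  have hc: "continuous_on (Zset \<delta> \<gamma> k) fst" by (intro continuous_intros)
  have "components (Zset \<delta> \<gamma> k) = {A, B}" "A \<noteq> B"
    using comps2[OF Z cA cB An Bn hc hA hB] by auto
  then have Q7: "\<exists>A B. components (Zset \<delta> \<gamma> k) = {A, B} \<and> A \<noteq> B \<and>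
                 A \<subseteq> {p. fst p \<le> \<tau>1} \<and> B \<subseteq> {p. fst p \<ge> \<tau>2}"
    using Asub Bsub by blast
  show ?thesis by (intro exI[of _ \<tau>1] exI[of _ \<tau>2] conjI t10 t12 t21 Q1 Q2 Q3 Q4 Q5 Q6 Q7)
qed

lemma caseC:
  fixes k \<gamma> \<delta> :: real
  assumes k1: "k > 1" and g0: "\<gamma> > 0" and d1: "\<delta> > 1" and dP: "\<delta> > Phi"
  shows "\<exists>\<tau>0. 0 < \<tau>0 \<and> \<tau>0 < 1 \<and>
          (\<forall>\<tau>. 0 < \<tau> \<and> \<tau> < \<tau>0 \<longrightarrow> fibre (Zset \<delta> \<gamma> k) \<tau> = {}) \<and>
          fibre (Zset \<delta> \<gamma> k) \<tau>0 = {cis (pi/2)} \<and>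
          (\<forall>\<tau>. \<tau>0 < \<tau> \<and> \<tau> \<le> 1 \<longrightarrow> card (fibre (Zset \<delta> \<gamma> k) \<tau>) = 2) \<and>
          supercritical_fold \<delta> \<gamma> k \<tau>0 (pi/2) \<and>
          connected (Zset \<delta> \<gamma> k)"
proof -
  have p0: "pexp \<delta> < 0" using pexp_neg dP by auto
  define L where "L = \<gamma> * (1 + k)"
  have L0: "L > 0" unfolding L_def using g0 k1 by simp
  define tb where "tb = min (1/2) ((L+2) powr (1 / pexp \<delta>))"
  have tb0: "0 < tb" "tb < 1" unfolding tb_def using L0 by auto
  have "((L+2) powr (1 / pexp \<delta>)) powr pexp \<delta> \<le> tb powr pexp \<delta>"
    using tb0 p0 unfolding tb_def by (intro powr_mono2') auto
  moreover have "((L+2) powr (1 / pexp \<delta>)) powr pexp \<delta> = L + 2" using p0 L0 by (simp add: powr_powr)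
  moreover have "tb powr \<delta> \<le> 1" using tb0 d1 by (intro powr_le1) auto
  ultimately have "FF \<delta> tb > L" unfolding FF_def by linarith
  moreover have "FF \<delta> 1 \<le> L" using FF_one L0 by simp
  ultimately obtain \<tau>0 where t0: "tb \<le> \<tau>0" "\<tau>0 \<le> 1" "FF \<delta> \<tau>0 = L"
    using IVT2'[of "FF \<delta>" 1 L tb] tb0 FF_cont_Icc[OF tb0(1)] by auto
  have t00: "0 < \<tau>0" using tb0 t0 by simp
  have t01: "\<tau>0 < 1" using t0 FF_one L0 by (cases "\<tau>0 = 1") auto
  have low: "FF \<delta> \<tau> > L" if "0 < \<tau>" "\<tau> < \<tau>0" for \<tau>
    using FF_dec2[OF d1 p0 that] t0 by simp
  have high: "FF \<delta> \<tau> < L" if "\<tau>0 < \<tau>" for \<tau>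
    using FF_dec2[OF d1 p0 t00 that] t0 by simp
  have Q1: "\<forall>\<tau>. 0 < \<tau> \<and> \<tau> < \<tau>0 \<longrightarrow> fibre (Zset \<delta> \<gamma> k) \<tau> = {}"
    using low fibre_empty[OF k1 g0] unfolding L_def by auto
  have Q2: "fibre (Zset \<delta> \<gamma> k) \<tau>0 = {cis (pi/2)}"
    using fibre_one[OF k1 g0 t00 t0(2)] t0 unfolding L_def by auto
  have Q3: "\<forall>\<tau>. \<tau>0 < \<tau> \<and> \<tau> \<le> 1 \<longrightarrow> card (fibre (Zset \<delta> \<gamma> k) \<tau>) = 2"
  proof (intro allI impI)
    fix \<tau> assume h: "\<tau>0 < \<tau> \<and> \<tau> \<le> 1"
    then have "0 < \<tau>" "\<tau> \<le> 1" "FF \<delta> \<tau> < L" using high t00 by auto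
    then show "card (fibre (Zset \<delta> \<gamma> k) \<tau>) = 2" using fibre_card2[OF k1 g0 d1] unfolding L_def by auto
  qed
  have Q4: "supercritical_fold \<delta> \<gamma> k \<tau>0 (pi/2)"
    unfolding supercritical_fold_def
  proof (intro conjI exI[of _ UNIV])
    show "fold_point \<delta> \<gamma> k \<tau>0 (pi/2)" using fold_at[OF k1 g0 t00 t0(2)] t0 unfolding L_def by auto
    show "\<exists>\<epsilon>>0. \<forall>\<tau>. \<tau>0 < \<tau> \<and> \<tau> < \<tau>0 + \<epsilon> \<and> \<tau> \<le> 1 \<longrightarrow> card (fibre (UNIV \<inter> Zset \<delta> \<gamma> k) \<tau>) = 2"
      using Q3 by (intro exI[of _ 1]) auto
    show "card (fibre (UNIV \<inter> Zset \<delta> \<gamma> k) \<tau>0) = 1" using Q2 by simp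
    show "\<exists>\<epsilon>>0. \<forall>\<tau>. \<tau>0 - \<epsilon> < \<tau> \<and> \<tau> < \<tau>0 \<and> 0 < \<tau> \<longrightarrow> fibre (UNIV \<inter> Zset \<delta> \<gamma> k) \<tau> = {}"
      using Q1 t00 by (intro exI[of _ "\<tau>0"]) auto
  qed auto
  have J: "{\<tau>. 0 < \<tau> \<and> \<tau> \<le> 1 \<and> ww \<delta> \<gamma> k \<tau> \<le> 1} = {\<tau>0..1}"
  proof -
    have "ww \<delta> \<gamma> k \<tau> \<le> 1 \<longleftrightarrow> FF \<delta> \<tau> \<le> L" for \<tau>
      using ww_cmp[OF k1 g0, of \<delta> \<tau>] unfolding L_def by linarith
    moreover have "(0 < \<tau> \<and> \<tau> \<le> 1 \<and> FF \<delta> \<tau> \<le> L) \<longleftrightarrow> \<tau> \<in> {\<tau>0..1}" for \<tau>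
    proof -
      consider "\<tau> < \<tau>0" | "\<tau> = \<tau>0" | "\<tau>0 < \<tau>" by linarith
      then show ?thesis
      proof cases
        case 1 then show ?thesis using low[of \<tau>] by auto
      next
        case 2 then show ?thesis using t0 t00 by auto
      next
        case 3 then show ?thesis using high[of \<tau>] t00 by (auto simp: less_imp_le)
      qed
    qed
    ultimately show ?thesis by blast
  qed
  have w0: "ww \<delta> \<gamma> k \<tau>0 = 1" using ww_cmp[OF k1 g0] t0 unfolding L_def by auto
  have Q5: "connected (Zset \<delta> \<gamma> k)" unfolding Z_eq[OF k1 g0 d1] J
  proof (rule connected_Un)
    show "connected (PP \<delta> \<gamma> k ` {\<tau>0..1})" using t00 by (intro conn_PP) auto
    show "connected (NN \<delta> \<gamma> k ` {\<tau>0..1})" using t00 by (intro conn_NN) auto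
    have "PP \<delta> \<gamma> k \<tau>0 \<in> PP \<delta> \<gamma> k ` {\<tau>0..1} \<inter> NN \<delta> \<gamma> k ` {\<tau>0..1}"
      using PP_eq_NN[OF w0] t01 by (metis IntI atLeastAtMost_iff image_eqI order_refl less_imp_le)
    then show "PP \<delta> \<gamma> k ` {\<tau>0..1} \<inter> NN \<delta> \<gamma> k ` {\<tau>0..1} \<noteq> {}" by blast
  qed
  show ?thesis by (intro exI[of _ \<tau>0] conjI t00 t01 Q1 Q2 Q3 Q4 Q5)
qed

theorem mainTheorem2:
  fixes k \<gamma> \<delta> :: real
  assumes "k > 1" and "\<gamma> > 0" and "\<delta> > 1"
  shows
   "(1 < \<delta> \<and> \<delta> < Phi \<and> \<gamma> > gamma_plus k \<delta> \<longrightarrow>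
       (\<forall>\<tau>. 0 < \<tau> \<and> \<tau> \<le> 1 \<longrightarrow> card (fibre (Zset \<delta> \<gamma> k) \<tau>) = 2) \<and>
       \<not> (\<exists>\<tau> s. fold_point \<delta> \<gamma> k \<tau> s) \<and>
       card (components (Zset \<delta> \<gamma> k)) = 2 \<and>
       (\<forall>c\<in>components (Zset \<delta> \<gamma> k). \<forall>\<tau>. 0 < \<tau> \<and> \<tau> \<le> 1 \<longrightarrow> card (fibre c \<tau>) = 1))
    \<and>
    (1 < \<delta> \<and> \<delta> < Phi \<and> 0 < \<gamma> \<and> \<gamma> < gamma_plus k \<delta> \<longrightarrow>
       (\<exists>\<tau>1 \<tau>2. 0 < \<tau>1 \<and> \<tau>1 < \<tau>2 \<and> \<tau>2 < 1 \<and>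
          (\<forall>\<tau>. (0 < \<tau> \<and> \<tau> < \<tau>1) \<or> (\<tau>2 < \<tau> \<and> \<tau> \<le> 1) \<longrightarrow> card (fibre (Zset \<delta> \<gamma> k) \<tau>) = 2) \<and>
          fibre (Zset \<delta> \<gamma> k) \<tau>1 = {cis (pi/2)} \<and>
          fibre (Zset \<delta> \<gamma> k) \<tau>2 = {cis (pi/2)} \<and>
          (\<forall>\<tau>. \<tau>1 < \<tau> \<and> \<tau> < \<tau>2 \<longrightarrow> fibre (Zset \<delta> \<gamma> k) \<tau> = {}) \<and>
          subcritical_fold \<delta> \<gamma> k \<tau>1 (pi/2) \<and>
          supercritical_fold \<delta> \<gamma> k \<tau>2 (pi/2) \<and>
          (\<exists>A B. components (Zset \<delta> \<gamma> k) = {A, B} \<and> A \<noteq> B \<and>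
                 A \<subseteq> {p. fst p \<le> \<tau>1} \<and> B \<subseteq> {p. fst p \<ge> \<tau>2})))
    \<and>
    (\<delta> > Phi \<longrightarrow>
       (\<exists>\<tau>0. 0 < \<tau>0 \<and> \<tau>0 < 1 \<and>
          (\<forall>\<tau>. 0 < \<tau> \<and> \<tau> < \<tau>0 \<longrightarrow> fibre (Zset \<delta> \<gamma> k) \<tau> = {}) \<and>
          fibre (Zset \<delta> \<gamma> k) \<tau>0 = {cis (pi/2)} \<and>
          (\<forall>\<tau>. \<tau>0 < \<tau> \<and> \<tau> \<le> 1 \<longrightarrow> card (fibre (Zset \<delta> \<gamma> k) \<tau>) = 2) \<and>
          supercritical_fold \<delta> \<gamma> k \<tau>0 (pi/2) \<and>
          connected (Zset \<delta> \<gamma> k)))"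
proof (rule conjI[OF impI conjI[OF impI impI]])
  assume "1 < \<delta> \<and> \<delta> < Phi \<and> \<gamma> > gamma_plus k \<delta>"
  then have h: "\<delta> < Phi" "\<gamma> > gamma_plus k \<delta>" by auto
  show "(\<forall>\<tau>. 0 < \<tau> \<and> \<tau> \<le> 1 \<longrightarrow> card (fibre (Zset \<delta> \<gamma> k) \<tau>) = 2) \<and>
       \<not> (\<exists>\<tau> s. fold_point \<delta> \<gamma> k \<tau> s) \<and>
       card (components (Zset \<delta> \<gamma> k)) = 2 \<and>
       (\<forall>c\<in>components (Zset \<delta> \<gamma> k). \<forall>\<tau>. 0 < \<tau> \<and> \<tau> \<le> 1 \<longrightarrow> card (fibre c \<tau>) = 1)"
    by (rule caseA[OF assms h])
next
  assume "1 < \<delta> \<and> \<delta> < Phi \<and> 0 < \<gamma> \<and> \<gamma> < gamma_plus k \<delta>"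
  then have h: "\<delta> < Phi" "\<gamma> < gamma_plus k \<delta>" by auto
  show "\<exists>\<tau>1 \<tau>2. 0 < \<tau>1 \<and> \<tau>1 < \<tau>2 \<and> \<tau>2 < 1 \<and>
          (\<forall>\<tau>. (0 < \<tau> \<and> \<tau> < \<tau>1) \<or> (\<tau>2 < \<tau> \<and> \<tau> \<le> 1) \<longrightarrow> card (fibre (Zset \<delta> \<gamma> k) \<tau>) = 2) \<and>
          fibre (Zset \<delta> \<gamma> k) \<tau>1 = {cis (pi/2)} \<and>
          fibre (Zset \<delta> \<gamma> k) \<tau>2 = {cis (pi/2)} \<and>
          (\<forall>\<tau>. \<tau>1 < \<tau> \<and> \<tau> < \<tau>2 \<longrightarrow> fibre (Zset \<delta> \<gamma> k) \<tau> = {}) \<and>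
          subcritical_fold \<delta> \<gamma> k \<tau>1 (pi/2) \<and>
          supercritical_fold \<delta> \<gamma> k \<tau>2 (pi/2) \<and>
          (\<exists>A B. components (Zset \<delta> \<gamma> k) = {A, B} \<and> A \<noteq> B \<and>
                 A \<subseteq> {p. fst p \<le> \<tau>1} \<and> B \<subseteq> {p. fst p \<ge> \<tau>2})"
    by (rule caseB[OF assms h])
next
  assume h: "\<delta> > Phi"
  show "\<exists>\<tau>0. 0 < \<tau>0 \<and> \<tau>0 < 1 \<and>
          (\<forall>\<tau>. 0 < \<tau> \<and> \<tau> < \<tau>0 \<longrightarrow> fibre (Zset \<delta> \<gamma> k) \<tau> = {}) \<and>
          fibre (Zset \<delta> \<gamma> k) \<tau>0 = {cis (pi/2)} \<and>
          (\<forall>\<tau>. \<tau>0 < \<tau> \<and> \<tau> \<le> 1 \<longrightarrow> card (fibre (Zset \<delta> \<gamma> k) \<tau>) = 2) \<and>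
          supercritical_fold \<delta> \<gamma> k \<tau>0 (pi/2) \<and>
          connected (Zset \<delta> \<gamma> k)"
    by (rule caseC[OF assms h])
qed

end
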